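(* Let $F:[0,\infty)\to[0,1]$ be a monotonically non-decreasing function, let $q_0\ge 0$, and let $(x_t)_{t\ge 0}$ be the real sequence defined by $x_0\ge 0$ and $x_{t+1}=F(x_t)\,x_t+q_0$ for $t\ge 0$. Suppose the set $\Gamma=\{t\ge 1 : x_t\le x_{t-1}\}$ is non-empty. Then: 1) If $q_0\neq 0$, then for every $t_0\in\Gamma$ and every $t\ge t_0$, $$x_t\le F(x_{t_0})^{t-t_0}\,x_{t_0}+q_0\,\frac{1-F(x_{t_0})^{t-t_0}}{1-F(x_{t_0})}.$$ 2) For every $t_0\in\Gamma$, $\sup_{t\ge t_0}x_t\le x_{t_0}$. 3) $\limsup_{t\to\infty}x_t\le \inf_{t_0\in\Gamma}x_{t_0}$.
   Context: $F(x)^{k}$ denotes the $k$-th power of the number $F(x)$. *)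

theory Defs
  imports "HOL-Analysis.Analysis"
begin

end

theory Submission
  imports Defs
begin

theorem lemma1:
  fixes F :: "real \<Rightarrow> real" and x :: "nat \<Rightarrow> real" and q0 :: real
  assumes F_range: "\<And>y. y \<ge> 0 \<Longrightarrow> 0 \<le> F y \<and> F y \<le> 1"
    and F_mono: "mono_on {0..} F"
    and q0_nonneg: "q0 \<ge> 0"
    and x0_nonneg: "x 0 \<ge> 0"
    and x_rec: "\<And>t. x (Suc t) = F (x t) * x t + q0"
    and Gamma_ne: "{t::nat. t \<ge> 1 \<and> x t \<le> x (t - 1)} \<noteq> {}"
  shows "(q0 \<noteq> 0 \<longrightarrow>
           (\<forall>t0 \<in> {t::nat. t \<ge> 1 \<and> x t \<le> x (t - 1)}. \<forall>t \<ge> t0.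
              x t \<le> F (x t0) ^ (t - t0) * x t0
                      + q0 * ((1 - F (x t0) ^ (t - t0)) / (1 - F (x t0)))))
       \<and> (\<forall>t0 \<in> {t::nat. t \<ge> 1 \<and> x t \<le> x (t - 1)}. (SUP t\<in>{t0..}. x t) \<le> x t0)
       \<and> limsup (\<lambda>t. ereal (x t)) \<le>
           ereal (INF t0\<in>{t::nat. t \<ge> 1 \<and> x t \<le> x (t - 1)}. x t0)"
proof -
  define G where "G = {t::nat. t \<ge> 1 \<and> x t \<le> x (t - 1)}"
  have nn: "x t \<ge> 0" for t
  proof (induction t)
    case 0 then show ?case using x0_nonneg by simp
  next
    case (Suc t)
    then show ?case using x_rec[of t] F_range[of "x t"] q0_nonneg by simp
  qed
  have Fm: "0 \<le> a \<Longrightarrow> a \<le> b \<Longrightarrow> F a \<le> F b" for a b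
    using F_mono by (auto simp: mono_on_def)
  have step: "Suc t \<in> G" if "t \<in> G" for t
  proof -
    from that have t1: "t \<ge> 1" and le: "x t \<le> x (t - 1)" by (auto simp: G_def)
    obtain s where s: "t = Suc s" using t1 by (cases t) auto
    have "F (x t) \<le> F (x s)" using Fm[OF nn le] s by simp
    hence "F (x t) * x t \<le> F (x s) * x s"
      using le s nn[of t] F_range[of "x t"] F_range[of "x s"] nn[of s]
      by (simp add: mult_mono)
    hence "x (Suc t) \<le> x t" using x_rec[of t] x_rec[of s] s by simp
    thus ?thesis by (simp add: G_def)
  qed
  have inG: "t0 + k \<in> G" if "t0 \<in> G" for t0 k
    using that by (induction k) (auto intro: step)
  have dec: "x (t0 + k) \<le> x t0" if "t0 \<in> G" for t0 k
  proof (induction k)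
    case 0 then show ?case by simp
  next
    case (Suc k)
    have "x (Suc (t0 + k)) \<le> x (Suc (t0+k) - 1)" using step[OF inG[OF that, of k]] by (simp add: G_def)
    then show ?case using Suc by simp
  qed
  have dec2: "x t \<le> x t0" if "t0 \<in> G" "t \<ge> t0" for t0 t
    using dec[OF that(1), of "t - t0"] that(2) by simp
  have P1: "x t \<le> F (x t0) ^ (t - t0) * x t0 + q0 * ((1 - F (x t0) ^ (t - t0)) / (1 - F (x t0)))"
    if q: "q0 \<noteq> 0" and t0: "t0 \<in> G" and tt: "t \<ge> t0" for t0 t
  proof -
    define a where "a = F (x t0)"
    have a1: "a < 1"
    proof (rule ccontr)
      assume "\<not> a < 1"
      hence a: "a = 1" using F_range[OF nn[of t0]] a_def by simp
      from t0 have t1: "t0 \<ge> 1" and le: "x t0 \<le> x (t0 - 1)" by (auto simp: G_def)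
      obtain s where s: "t0 = Suc s" using t1 by (cases t0) auto
      have "F (x t0) \<le> F (x s)" using Fm[OF nn le] s by simp
      hence "F (x s) = 1" using a a_def F_range[OF nn[of s]] by simp
      hence "x t0 = x s + q0" using x_rec[of s] s by simp
      thus False using le s q q0_nonneg by simp
    qed
    have a0: "a \<ge> 0" using F_range[OF nn[of t0]] a_def by simp
    have "x (t0 + k) \<le> a ^ k * x t0 + q0 * ((1 - a ^ k) / (1 - a))" for k
    proof (induction k)
      case 0 then show ?case by simp
    next
      case (Suc k)
      have "F (x (t0 + k)) \<le> a" using Fm[OF nn dec[OF t0, of k]] a_def by simp
      hence "x (t0 + Suc k) \<le> a * x (t0 + k) + q0" using x_rec[of "t0 + k"] nn[of "t0+k"]
        by (simp add: mult_right_mono)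
      also have "\<dots> \<le> a * (a ^ k * x t0 + q0 * ((1 - a ^ k) / (1 - a))) + q0"
        using Suc a0 by (simp add: mult_left_mono)
      also have "\<dots> = a ^ Suc k * x t0 + q0 * ((1 - a ^ Suc k) / (1 - a))"
        using a1 by (simp add: field_simps)
      finally show ?case .
    qed
    from this[of "t - t0"] tt show ?thesis by (simp add: a_def)
  qed
  have P2: "(SUP t\<in>{t0..}. x t) \<le> x t0" if "t0 \<in> G" for t0
    by (rule cSUP_least) (use dec2[OF that] in auto)
  have L: "limsup (\<lambda>t. ereal (x t)) \<le> ereal (x t0)" if "t0 \<in> G" for t0
    by (rule Limsup_bounded) (use dec2[OF that] in \<open>auto simp: eventually_sequentially\<close>)
  have bdd: "bdd_below (x ` G)" using nn by (auto simp: bdd_below_def)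
  have "ereal (INF t0\<in>G. x t0) = (INF a\<in>x ` G. ereal a)"
    using ereal_Inf'[OF bdd] Gamma_ne by (simp add: G_def)
  moreover have "limsup (\<lambda>t. ereal (x t)) \<le> (INF a\<in>x ` G. ereal a)"
    using L by (auto intro!: INF_greatest)
  ultimately have P3: "limsup (\<lambda>t. ereal (x t)) \<le> ereal (INF t0\<in>G. x t0)" by simp
  show ?thesis using P1 P2 P3 unfolding G_def by blast
qed

end
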